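(* Let $0<\delta\le1$ and let $t$ be a time with $\omega(t)>0$ at which the stability conditions $|\upsilon(t)/\omega(t)|\le\delta$ and $|\eta^{(n-1)}(t)/\omega^n(t)|\le\delta^n$ for $n=2,3$ hold (with $x_+$ three times continuously differentiable and nonvanishing near $t$). Let $(w_k)_{k\ge0}$ be complex numbers (the values $w_k=\widetilde\Psi_k(\omega_\psi)$) with $w_0=1$, $w_1=0$, and satisfying the wavelet suitability criteria $|w_k|\le k!\,\delta^{-k/2}$ for even $k\ge2$ and $|w_k|\le k!\,\delta^{-(k-1)/2}$ for odd $k\ge3$. For real $z$ define \[ F(z)=\sum_{m=0}^{\infty}\sum_{n=0}^{3}\sum_{p=0}^{n}\frac{(-i)^n}{(n-p)!\,p!\,m!}\,w^*_{m+n}\,\widetilde\rho_n(t)\,z^{m+p}. \] Then for every $C>0$ there is a constant $K$ depending only on $C$ such that, whenever $C\delta^{3/2}\le\frac12$ and $|z|\le C\delta^2$, the series $F(z)$ converges absolutely and \[ F(z)-F(0)=-iz\,\widetilde\rho_1(t)\,w_2^*-z\Big[\widetilde\rho_2(t)\Big(w_2^*+\tfrac12w_3^*\Big)-\tfrac{i}{6}\widetilde\rho_3(t)\,w_4^*\Big]+\tfrac12z^2w_2^*+E(z),\qquad |E(z)|\le K\delta^4. \] Here the first term is $O(\delta^2)$ and the bracketed and $z^2$ terms are $O(\delta^3)$.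
   Context: $\upsilon,\omega$ are the instantaneous bandwidth and frequency of the analytic signal $x_+$ ($\upsilon=\Re\frac{d}{dt}\ln x_+$, $\omega=\Im\frac{d}{dt}\ln x_+$), $\eta=\omega-i\upsilon$, and $\widetilde\rho_n(t)=\frac{1}{\omega^n(t)x_+(t)}\frac{d^n}{d\tau^n}[x_+(t+\tau)e^{-i\omega(t)\tau}]|_{\tau=0}$, $\widetilde\rho_0=1$. For an analytic wavelet with peak frequency $\omega_\psi$ and $\Psi(\omega_\psi)=2$, $\widetilde\Psi_k(\omega)=\omega^k\Psi^{(k)}(\omega)/\Psi(\omega)$. In the paper's notation, with $z=\Delta\omega(t,s)=s\omega(t)/\omega_\psi-1$, $F(z)$ is the main part of $W_\psi(t,s)/x_+(t)$ in the scale deviation expansion truncated at $N=3$, $F(0)-1$ is the (truncated) scale-independent perturbation $\Delta x_\psi(t)$ (the relative deviation of the localized analytic signal $W_\psi(t,\omega_\psi/\omega(t))$ from $x_+(t)$), and $F(z)-F(0)$ is the scale-dependent perturbation $\Delta W_\psi(t,s)$ apart from the transform residual; the condition $|z|\le C\delta^2$ expresses that $(t,s)$ lies in the instantaneous frequency 2-neighborhood. *)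

theory Defs
  imports "HOL-Analysis.Analysis"
begin

fun nderiv :: "nat \<Rightarrow> (real \<Rightarrow> 'a::real_normed_vector) \<Rightarrow> real \<Rightarrow> 'a" where
  "nderiv 0 f = f"
| "nderiv (Suc n) f = (\<lambda>s. vector_derivative (nderiv n f) (at s))"

text \<open>Instantaneous bandwidth and frequency of the analytic signal x:
  upsilon = Re (d/dt ln x) = Re (x'/x), omega = Im (x'/x), eta = omega - i upsilon.\<close>
definition inst_bw :: "(real \<Rightarrow> complex) \<Rightarrow> real \<Rightarrow> real" where
  "inst_bw x s = Re (nderiv 1 x s / x s)"

definition inst_freq :: "(real \<Rightarrow> complex) \<Rightarrow> real \<Rightarrow> real" where
  "inst_freq x s = Im (nderiv 1 x s / x s)"

definition inst_eta :: "(real \<Rightarrow> complex) \<Rightarrow> real \<Rightarrow> complex" where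
  "inst_eta x s = complex_of_real (inst_freq x s) - \<i> * complex_of_real (inst_bw x s)"

definition rho_tilde :: "(real \<Rightarrow> complex) \<Rightarrow> real \<Rightarrow> nat \<Rightarrow> complex" where
  "rho_tilde x t n =
     nderiv n (\<lambda>\<tau>. x (t + \<tau>) * exp (- (\<i> * complex_of_real (inst_freq x t * \<tau>)))) 0
       / (complex_of_real (inst_freq x t ^ n) * x t)"

definition F_term :: "(nat \<Rightarrow> complex) \<Rightarrow> (nat \<Rightarrow> complex) \<Rightarrow> real \<Rightarrow> nat \<Rightarrow> nat \<Rightarrow> nat \<Rightarrow> complex" where
  "F_term w \<rho> z m n p =
     (- \<i>) ^ n / of_real (fact (n - p) * fact p * fact m) * cnj (w (m + n)) * \<rho> n
       * complex_of_real z ^ (m + p)"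

definition F_ser :: "(nat \<Rightarrow> complex) \<Rightarrow> (nat \<Rightarrow> complex) \<Rightarrow> real \<Rightarrow> complex" where
  "F_ser w \<rho> z = (\<Sum>m. \<Sum>n\<le>3. \<Sum>p\<le>n. F_term w \<rho> z m n p)"

end

theory Submission
  imports Defs
begin



lemma nderiv_step:
  assumes "open S" "\<forall>y\<in>S. nderiv k g y = f y" "\<forall>y\<in>S. (f has_vector_derivative f' y) (at y)"
  shows "\<forall>y\<in>S. nderiv (Suc k) g y = f' y"
proof
  fix y assume y: "y \<in> S"
  have "(nderiv k g has_vector_derivative f' y) (at y)"
    using has_vector_derivative_transform_within_open[OF assms(3)[rule_format, OF y] assms(1) y] assms(2) y
    by metis
  then show "nderiv (Suc k) g y = f' y" by (simp add: vector_derivative_at)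
qed

lemma shift_vd:
  assumes "(f has_vector_derivative f') (at (t + \<tau>))"
  shows "((\<lambda>\<tau>. f (t + \<tau>)) has_vector_derivative f') (at \<tau>)"
proof -
  have "((\<lambda>\<tau>. t + \<tau>) has_vector_derivative 1) (at \<tau>)"
    by (auto intro!: derivative_eq_intros)
  from vector_diff_chain_at[OF this assms] show ?thesis by (simp add: o_def)
qed

lemma exp_vd:
  fixes \<omega> :: real
  shows "((\<lambda>\<tau>. exp (- (\<i> * complex_of_real (\<omega> * \<tau>)))) has_vector_derivative
          (- (\<i> * \<omega>)) * exp (- (\<i> * complex_of_real (\<omega> * \<tau>)))) (at \<tau>)"
proof -
  have "((\<lambda>\<tau>. - (\<i> * complex_of_real (\<omega> * \<tau>))) has_vector_derivative (- (\<i> * \<omega>))) (at \<tau>)"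
    by (auto intro!: derivative_eq_intros)
  from field_vector_diff_chain_at[OF this DERIV_exp] show ?thesis by (simp add: o_def)
qed




lemma prodE_vd:
  fixes \<omega> :: real
  assumes "(P has_vector_derivative P') (at \<tau>)"
  shows "((\<lambda>\<tau>. P \<tau> * exp (- (\<i> * complex_of_real (\<omega> * \<tau>)))) has_vector_derivative
          (P' - \<i> * \<omega> * P \<tau>) * exp (- (\<i> * complex_of_real (\<omega> * \<tau>)))) (at \<tau>)"
  using has_vector_derivative_mult[OF assms exp_vd[of \<omega> \<tau>]]
  by (simp add: algebra_simps)

lemma rho_formulas:
  fixes \<omega> t :: real and x :: "real \<Rightarrow> complex" 
  assumes e: "e > 0"
    and D: "\<forall>s\<in>ball t e. (\<forall>k<3. (nderiv k x has_vector_derivative nderiv (Suc k) x s) (at s))"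
  shows "nderiv 1 (\<lambda>\<tau>. x (t + \<tau>) * exp (- (\<i> * complex_of_real (\<omega> * \<tau>)))) 0
           = nderiv 1 x t - \<i> * \<omega> * x t"
    and "nderiv 2 (\<lambda>\<tau>. x (t + \<tau>) * exp (- (\<i> * complex_of_real (\<omega> * \<tau>)))) 0
           = nderiv 2 x t - 2 * \<i> * \<omega> * nderiv 1 x t - \<omega>^2 * x t"
    and "nderiv 3 (\<lambda>\<tau>. x (t + \<tau>) * exp (- (\<i> * complex_of_real (\<omega> * \<tau>)))) 0
           = nderiv 3 x t - 3 * \<i> * \<omega> * nderiv 2 x t - 3 * \<omega>^2 * nderiv 1 x t + \<i> * \<omega>^3 * x t"
proof -
  define E where "E = (\<lambda>\<tau>. exp (- (\<i> * complex_of_real (\<omega> * \<tau>))))"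
  define g where "g = (\<lambda>\<tau>. x (t + \<tau>) * E \<tau>)"
  let ?S = "ball (0::real) e"
  have dx: "((\<lambda>\<tau>. nderiv k x (t + \<tau>)) has_vector_derivative nderiv (Suc k) x (t + \<tau>)) (at \<tau>)"
    if "\<tau> \<in> ?S" "k < 3" for \<tau> k
  proof -
    have "t + \<tau> \<in> ball t e" using that by (auto simp: dist_norm)
    then show ?thesis using D that by (intro shift_vd) auto
  qed
  have dx0: "((\<lambda>\<tau>. x (t + \<tau>)) has_vector_derivative nderiv 1 x (t + \<tau>)) (at \<tau>)"
    if "\<tau> \<in> ?S" for \<tau> using dx[OF that, of 0] by simp
  have Suc1: "Suc 1 = 2" and Suc2: "Suc 2 = 3" by simp_all
  have E0: "E 0 = 1" by (simp add: E_def)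
  have s0: "\<forall>y\<in>?S. nderiv 0 g y = g y" by simp
  have s1: "\<forall>y\<in>?S. nderiv 1 g y = (nderiv 1 x (t + y) - \<i> * \<omega> * x (t + y)) * E y"
  proof -
    have "\<forall>y\<in>?S. (g has_vector_derivative (nderiv 1 x (t + y) - \<i> * \<omega> * x (t + y)) * E y) (at y)"
    proof
      fix y assume y: "y \<in> ?S"
      show "(g has_vector_derivative (nderiv 1 x (t + y) - \<i> * \<omega> * x (t + y)) * E y) (at y)"
        using prodE_vd[OF dx0[OF y], of \<omega>] unfolding g_def E_def by simp
    qed
    from nderiv_step[OF open_ball s0 this] show ?thesis by simp
  qed
  have s2: "\<forall>y\<in>?S. nderiv 2 g y = (nderiv 2 x (t + y) - 2 * \<i> * \<omega> * nderiv 1 x (t + y) - \<omega>^2 * x (t + y)) * E y"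
  proof -
    have "\<forall>y\<in>?S. ((\<lambda>\<tau>. (nderiv 1 x (t + \<tau>) - \<i> * \<omega> * x (t + \<tau>)) * E \<tau>) has_vector_derivative
       (nderiv 2 x (t + y) - 2 * \<i> * \<omega> * nderiv 1 x (t + y) - \<omega>^2 * x (t + y)) * E y) (at y)"
    proof
      fix y assume y: "y \<in> ?S"
      have "((\<lambda>\<tau>. nderiv 1 x (t + \<tau>) - \<i> * \<omega> * x (t + \<tau>)) has_vector_derivative
              nderiv 2 x (t + y) - \<i> * \<omega> * nderiv 1 x (t + y)) (at y)"
        using dx[OF y, of 1, unfolded Suc1] dx0[OF y]
        by (auto intro!: derivative_eq_intros simp del: nderiv.simps)
      from prodE_vd[OF this, of \<omega>] show "((\<lambda>\<tau>. (nderiv 1 x (t + \<tau>) - \<i> * \<omega> * x (t + \<tau>)) * E \<tau>) has_vector_derivative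
       (nderiv 2 x (t + y) - 2 * \<i> * \<omega> * nderiv 1 x (t + y) - \<omega>^2 * x (t + y)) * E y) (at y)"
        unfolding E_def by (simp add: algebra_simps power2_eq_square)
    qed
    from nderiv_step[OF open_ball s1 this] show ?thesis by (simp add: numeral_eq_Suc)
  qed
  have s3: "\<forall>y\<in>?S. nderiv 3 g y = (nderiv 3 x (t + y) - 3 * \<i> * \<omega> * nderiv 2 x (t + y) - 3 * \<omega>^2 * nderiv 1 x (t + y) + \<i> * \<omega>^3 * x (t + y)) * E y"
  proof -
    have "\<forall>y\<in>?S. ((\<lambda>\<tau>. (nderiv 2 x (t + \<tau>) - 2 * \<i> * \<omega> * nderiv 1 x (t + \<tau>) - \<omega>^2 * x (t + \<tau>)) * E \<tau>) has_vector_derivative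
       (nderiv 3 x (t + y) - 3 * \<i> * \<omega> * nderiv 2 x (t + y) - 3 * \<omega>^2 * nderiv 1 x (t + y) + \<i> * \<omega>^3 * x (t + y)) * E y) (at y)"
    proof
      fix y assume y: "y \<in> ?S"
      have "((\<lambda>\<tau>. nderiv 2 x (t + \<tau>) - 2 * \<i> * \<omega> * nderiv 1 x (t + \<tau>) - \<omega>^2 * x (t + \<tau>)) has_vector_derivative
              nderiv 3 x (t + y) - 2 * \<i> * \<omega> * nderiv 2 x (t + y) - \<omega>^2 * nderiv 1 x (t + y)) (at y)"
        using dx[OF y, of 2, unfolded Suc2] dx[OF y, of 1, unfolded Suc1] dx0[OF y]
        by (auto intro!: derivative_eq_intros simp del: nderiv.simps)
      from prodE_vd[OF this, of \<omega>] show "((\<lambda>\<tau>. (nderiv 2 x (t + \<tau>) - 2 * \<i> * \<omega> * nderiv 1 x (t + \<tau>) - \<omega>^2 * x (t + \<tau>)) * E \<tau>) has_vector_derivative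
       (nderiv 3 x (t + y) - 3 * \<i> * \<omega> * nderiv 2 x (t + y) - 3 * \<omega>^2 * nderiv 1 x (t + y) + \<i> * \<omega>^3 * x (t + y)) * E y) (at y)"
        unfolding E_def by (simp add: algebra_simps power2_eq_square power3_eq_cube)
    qed
    from nderiv_step[OF open_ball s2 this] show ?thesis by (simp add: numeral_eq_Suc)
  qed
  have 0: "(0::real) \<in> ?S" using e by simp
  show "nderiv 1 (\<lambda>\<tau>. x (t + \<tau>) * exp (- (\<i> * complex_of_real (\<omega> * \<tau>)))) 0
           = nderiv 1 x t - \<i> * \<omega> * x t"
    using s1[rule_format, OF 0] E0 unfolding g_def E_def by (simp del: nderiv.simps)
  show "nderiv 2 (\<lambda>\<tau>. x (t + \<tau>) * exp (- (\<i> * complex_of_real (\<omega> * \<tau>)))) 0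
           = nderiv 2 x t - 2 * \<i> * \<omega> * nderiv 1 x t - \<omega>^2 * x t"
    using s2[rule_format, OF 0] E0 unfolding g_def E_def by (simp del: nderiv.simps)
  show "nderiv 3 (\<lambda>\<tau>. x (t + \<tau>) * exp (- (\<i> * complex_of_real (\<omega> * \<tau>)))) 0
           = nderiv 3 x t - 3 * \<i> * \<omega> * nderiv 2 x t - 3 * \<omega>^2 * nderiv 1 x t + \<i> * \<omega>^3 * x t"
    using s3[rule_format, OF 0] E0 unfolding g_def E_def by (simp del: nderiv.simps)
qed




lemma alg1:
  fixes a b c d :: complex and \<upsilon> \<omega> :: real
  assumes a: "a \<noteq> 0" and w: "\<omega> \<noteq> 0" and b: "b = (\<upsilon> + \<i> * \<omega>) * a"
  shows "(b - \<i> * \<omega> * a) / (complex_of_real (\<omega>^1) * a) = complex_of_real (\<upsilon> / \<omega>)"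
proof -
  have "complex_of_real \<omega> \<noteq> 0" using w by simp
  then show ?thesis using a unfolding b by (simp add: field_simps)
qed

lemma alg2:
  fixes a b c d :: complex and \<upsilon> \<omega> :: real
  assumes a: "a \<noteq> 0" and w: "\<omega> \<noteq> 0" and b: "b = (\<upsilon> + \<i> * \<omega>) * a"
  shows "(c - 2 * \<i> * \<omega> * b - \<omega>^2 * a) / (complex_of_real (\<omega>^2) * a)
         = (\<upsilon>/\<omega>)^2 + \<i> * ((-\<i> * (c / a - b^2 / a^2)) / \<omega>^2)"
proof -
  have "complex_of_real \<omega> \<noteq> 0" using w by simp
  then show ?thesis using a unfolding b by (simp add: field_simps power2_eq_square)
qed

lemma alg3:
  fixes a b c d :: complex and \<upsilon> \<omega> :: real
  assumes a: "a \<noteq> 0" and w: "\<omega> \<noteq> 0" and b: "b = (\<upsilon> + \<i> * \<omega>) * a"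
  shows "(d - 3 * \<i> * \<omega> * c - 3 * \<omega>^2 * b + \<i> * \<omega>^3 * a) / (complex_of_real (\<omega>^3) * a)
         = \<i> * ((-\<i> * (d / a - 3 * b * c / a^2 + 2 * b^3 / a^3)) / \<omega>^3) + (\<upsilon>/\<omega>)^3
           + 3 * \<i> * (\<upsilon>/\<omega>) * ((-\<i> * (c / a - b^2 / a^2)) / \<omega>^2)"
proof -
  have "complex_of_real \<omega> \<noteq> 0" using w by simp
  then show ?thesis using a unfolding b by (simp add: field_simps power2_eq_square power3_eq_cube)
qed

lemma inv_vd:
  fixes f :: "real \<Rightarrow> complex"
  assumes "(f has_vector_derivative f') (at s)" "f s \<noteq> 0"
  shows "((\<lambda>s. inverse (f s)) has_vector_derivative - (f' * (inverse (f s) * inverse (f s)))) (at s)"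
  using field_vector_diff_chain_at[OF assms(1) DERIV_inverse[OF assms(2)]]
  by (simp add: o_def power2_eq_square)

lemma eta_eq: "inst_eta x = (\<lambda>s. - \<i> * (nderiv 1 x s * inverse (x s)))"
proof (rule ext)
  fix s
  have "\<And>q. complex_of_real (Im q) - \<i> * complex_of_real (Re q) = - \<i> * q"
    by (simp add: complex_eq_iff)
  then show "inst_eta x s = - \<i> * (nderiv 1 x s * inverse (x s))"
    unfolding inst_eta_def inst_freq_def inst_bw_def by (metis divide_inverse)
qed

lemma eta_formulas:
  fixes x :: "real \<Rightarrow> complex" and t e :: real
  assumes e: "e > 0"
    and H: "\<forall>s\<in>ball t e. x s \<noteq> 0 \<and> (\<forall>k<3. (nderiv k x has_vector_derivative nderiv (Suc k) x s) (at s))"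
  shows "nderiv 1 (inst_eta x) t = - \<i> * (nderiv 2 x t / x t - (nderiv 1 x t)^2 / (x t)^2)"
    and "nderiv 2 (inst_eta x) t = - \<i> * (nderiv 3 x t / x t - 3 * nderiv 1 x t * nderiv 2 x t / (x t)^2
                                      + 2 * (nderiv 1 x t)^3 / (x t)^3)"
proof -
  let ?S = "ball t e"
  have Suc1: "Suc 1 = 2" and Suc2: "Suc 2 = 3" by simp_all
  have d0: "(x has_vector_derivative nderiv 1 x s) (at s)" if "s \<in> ?S" for s
    using H that by (metis One_nat_def nderiv.simps(1) zero_less_numeral)
  have d1: "(nderiv 1 x has_vector_derivative nderiv 2 x s) (at s)" if "s \<in> ?S" for s
    using H that by (metis Suc1 one_less_numeral_iff semiring_norm(77))
  have d2: "(nderiv 2 x has_vector_derivative nderiv 3 x s) (at s)" if "s \<in> ?S" for s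
    using H that by (metis Suc2 lessI numeral_3_eq_3)
  have nz: "x s \<noteq> 0" if "s \<in> ?S" for s using H that by blast
  define I where "I = (\<lambda>s. inverse (x s))"
  have dI: "(I has_vector_derivative - (nderiv 1 x s * (I s * I s))) (at s)" if "s \<in> ?S" for s
    unfolding I_def using inv_vd[OF d0[OF that] nz[OF that]] by simp
  define H1 where "H1 = (\<lambda>s. - \<i> * (nderiv 2 x s * I s - nderiv 1 x s * nderiv 1 x s * (I s * I s)))"
  have e0: "\<forall>s\<in>?S. nderiv 0 (inst_eta x) s = - \<i> * (nderiv 1 x s * I s)"
    by (simp only: nderiv.simps(1) eta_eq I_def) simp
  have "\<forall>s\<in>?S. ((\<lambda>s. - \<i> * (nderiv 1 x s * I s)) has_vector_derivative H1 s) (at s)"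
  proof
    fix s assume s: "s \<in> ?S"
    show "((\<lambda>s. - \<i> * (nderiv 1 x s * I s)) has_vector_derivative H1 s) (at s)"
      unfolding H1_def
      by (rule derivative_eq_intros d1[OF s] dI[OF s] refl | simp add: algebra_simps del: nderiv.simps)+
  qed
  from nderiv_step[OF open_ball e0 this] have e1: "\<forall>s\<in>?S. nderiv 1 (inst_eta x) s = H1 s" by simp
  define H2 where "H2 = (\<lambda>s. - \<i> * (nderiv 3 x s * I s - nderiv 2 x s * nderiv 1 x s * (I s * I s)
      - (2 * nderiv 1 x s * nderiv 2 x s * (I s * I s) - 2 * nderiv 1 x s * nderiv 1 x s * nderiv 1 x s * (I s * I s * I s))))"
  have "\<forall>s\<in>?S. (H1 has_vector_derivative H2 s) (at s)"
  proof
    fix s assume s: "s \<in> ?S"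
    show "(H1 has_vector_derivative H2 s) (at s)"
      unfolding H1_def H2_def
      by (rule derivative_eq_intros d1[OF s] d2[OF s] dI[OF s] refl | simp add: algebra_simps del: nderiv.simps)+
  qed
  from nderiv_step[OF open_ball e1 this] have e2: "\<forall>s\<in>?S. nderiv 2 (inst_eta x) s = H2 s"
    by (simp only: Suc1)
  have t: "t \<in> ?S" using e by simp
  show "nderiv 1 (inst_eta x) t = - \<i> * (nderiv 2 x t / x t - (nderiv 1 x t)^2 / (x t)^2)"
  proof -
    have "nderiv 1 (inst_eta x) t = H1 t" using e1 t by blast
    also have "H1 t = - \<i> * (nderiv 2 x t / x t - (nderiv 1 x t)^2 / (x t)^2)"
      using nz[OF t] unfolding H1_def I_def
      by (simp add: field_simps power2_eq_square del: nderiv.simps)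
    finally show ?thesis .
  qed
  show "nderiv 2 (inst_eta x) t = - \<i> * (nderiv 3 x t / x t - 3 * nderiv 1 x t * nderiv 2 x t / (x t)^2
                                      + 2 * (nderiv 1 x t)^3 / (x t)^3)"
  proof -
    have "nderiv 2 (inst_eta x) t = H2 t" using e2 t by blast
    also have "H2 t = - \<i> * (nderiv 3 x t / x t - 3 * nderiv 1 x t * nderiv 2 x t / (x t)^2
                                      + 2 * (nderiv 1 x t)^3 / (x t)^3)"
      using nz[OF t] unfolding H2_def I_def
      by (simp add: field_simps power2_eq_square power3_eq_cube del: nderiv.simps)
    finally show ?thesis .
  qed
qed




lemma rho_bounds:
  fixes x :: "real \<Rightarrow> complex" and t e \<delta> :: real
  assumes e: "e > 0"
    and H: "\<forall>s\<in>ball t e. x s \<noteq> 0 \<and> (\<forall>k<3. (nderiv k x has_vector_derivative nderiv (Suc k) x s) (at s))"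
    and om: "inst_freq x t > 0"
    and bw: "\<bar>inst_bw x t / inst_freq x t\<bar> \<le> \<delta>"
    and eta: "\<forall>n\<in>{2,3}. norm (nderiv (n - 1) (inst_eta x) t / complex_of_real (inst_freq x t ^ n)) \<le> \<delta> ^ n"
  shows "rho_tilde x t 0 = 1" "norm (rho_tilde x t 1) \<le> \<delta>"
    "norm (rho_tilde x t 2) \<le> 2 * \<delta>^2" "norm (rho_tilde x t 3) \<le> 5 * \<delta>^3"
proof -
  define \<omega> where "\<omega> = inst_freq x t"
  define \<upsilon> where "\<upsilon> = inst_bw x t"
  define a where "a = x t"
  define b where "b = nderiv 1 x t"
  define c where "c = nderiv 2 x t"
  define d where "d = nderiv 3 x t"
  have a0: "a \<noteq> 0" using H e unfolding a_def by simp
  have w0: "\<omega> \<noteq> 0" using om unfolding \<omega>_def by simp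
  have "b / a = complex_of_real \<upsilon> + \<i> * complex_of_real \<omega>"
    unfolding \<upsilon>_def \<omega>_def inst_bw_def inst_freq_def a_def b_def by (simp add: complex_eq_iff)
  then have bb: "b = (\<upsilon> + \<i> * \<omega>) * a" using a0 by (simp add: field_simps)
  have D: "\<forall>s\<in>ball t e. (\<forall>k<3. (nderiv k x has_vector_derivative nderiv (Suc k) x s) (at s))"
    using H by blast
  note RF = rho_formulas[OF e D, of \<omega>]
  note EF = eta_formulas[OF e H]
  define r where "r = \<upsilon> / \<omega>"
  define A1 where "A1 = nderiv 1 (inst_eta x) t / complex_of_real (\<omega> ^ 2)"
  define A2 where "A2 = nderiv 2 (inst_eta x) t / complex_of_real (\<omega> ^ 3)"
  have r: "\<bar>r\<bar> \<le> \<delta>" using bw unfolding r_def \<upsilon>_def \<omega>_def .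
  have dpos: "0 \<le> \<delta>" using r by linarith
  have nA1: "norm A1 \<le> \<delta>^2" using eta unfolding A1_def \<omega>_def by auto
  have nA2: "norm A2 \<le> \<delta>^3" using eta unfolding A2_def \<omega>_def by auto
  show "rho_tilde x t 0 = 1" using a0 unfolding rho_tilde_def a_def by simp
  have "rho_tilde x t 1 = complex_of_real r"
    unfolding rho_tilde_def \<omega>_def[symmetric] RF(1) unfolding r_def a_def[symmetric] b_def[symmetric]
    by (rule alg1[OF a0 w0 bb])
  then show "norm (rho_tilde x t 1) \<le> \<delta>" using r by simp
  have "rho_tilde x t 2 = r^2 + \<i> * A1"
    unfolding rho_tilde_def \<omega>_def[symmetric] RF(2) A1_def EF(1) unfolding r_def a_def[symmetric]
      b_def[symmetric] c_def[symmetric]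
    using alg2[OF a0 w0 bb, of c] by simp
  then have "norm (rho_tilde x t 2) \<le> \<bar>r\<bar>^2 + norm A1"
    using norm_triangle_ineq[of "complex_of_real r ^2" "\<i> * A1"] by (simp add: norm_mult norm_power)
  also have "\<dots> \<le> \<delta>^2 + \<delta>^2" using r nA1 dpos by (intro add_mono power_mono) auto
  finally show "norm (rho_tilde x t 2) \<le> 2 * \<delta>^2" by simp
  have "rho_tilde x t 3 = \<i> * A2 + r^3 + 3 * \<i> * r * A1"
    unfolding rho_tilde_def \<omega>_def[symmetric] RF(3) A1_def A2_def EF unfolding r_def a_def[symmetric]
      b_def[symmetric] c_def[symmetric] d_def[symmetric]
    using alg3[OF a0 w0 bb, of d c] by simp
  then have "norm (rho_tilde x t 3) \<le> norm A2 + \<bar>r\<bar>^3 + 3 * \<bar>r\<bar> * norm A1"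
    using norm_triangle_ineq[of "\<i> * A2 + complex_of_real r ^3" "3 * \<i> * r * A1"]
      norm_triangle_ineq[of "\<i> * A2" "complex_of_real r ^3"] by (simp add: norm_mult norm_power)
  also have "\<dots> \<le> \<delta>^3 + \<delta>^3 + 3 * \<delta> * \<delta>^2" using r nA1 nA2 dpos
    by (intro add_mono power_mono mult_mono) auto
  finally show "norm (rho_tilde x t 3) \<le> 5 * \<delta>^3" by (simp add: power2_eq_square power3_eq_cube)
qed




lemma fact_le_pow: "fact (m + n) \<le> (fact m :: nat) * (m + n) ^ n"
proof (induction n)
  case 0 then show ?case by simp
next
  case (Suc n)
  have "fact (m + Suc n) = (m + Suc n) * (fact (m + n) :: nat)" by simp
  also have "\<dots> \<le> (m + Suc n) * (fact m * (m + n) ^ n)" by (rule mult_le_mono2[OF Suc.IH])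
  also have "\<dots> \<le> (m + Suc n) * (fact m * (m + Suc n) ^ n)"
    by (intro mult_le_mono2 mult_le_mono2 power_mono) auto
  also have "\<dots> = fact m * (m + Suc n) ^ Suc n" by (simp add: algebra_simps)
  finally show ?case .
qed

lemma coeff_le:
  assumes "n \<le> 3"
  shows "fact (m + n) / (fact (n - p) * fact p * fact m) \<le> (real m + 3) ^ 3"
proof -
  have "real (fact (m + n)) \<le> real (fact m * (m + n) ^ n)" using fact_le_pow[of m n] by linarith
  also have "\<dots> \<le> real (fact m) * (real m + 3) ^ 3"
  proof -
    have "(real m + real n) ^ n \<le> (real m + 3) ^ n" using assms by (intro power_mono) auto
    also have "\<dots> \<le> (real m + 3) ^ 3" using assms by (intro power_increasing) auto
    finally show ?thesis by (simp add: mult_left_mono)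
  qed
  finally have 1: "fact (m + n) \<le> fact m * (real m + 3) ^ 3" by simp
  have 2: "(1::real) \<le> fact (n - p) * fact p" using fact_ge_1 by (metis mult_ge1_I) 
  have "fact (m + n) / (fact (n - p) * fact p * fact m) \<le> (fact (m + n) :: real) / (1 * fact m)"
  proof -
    have 3: "1 * fact m \<le> fact (n - p) * fact p * (fact m :: real)" using 2 by (intro mult_right_mono) auto
    show ?thesis by (rule divide_left_mono[OF 3]) (auto intro!: mult_pos_pos)
  qed
  also have "\<dots> \<le> (real m + 3) ^ 3" using 1 by (simp add: divide_le_eq mult.commute)
  finally show ?thesis .
qed

lemma term_general:
  fixes s C z :: real and w \<rho> :: "nat \<Rightarrow> complex"
  assumes s: "0 < s" and W: "\<And>k. norm (w k) * s ^ k \<le> fact k * s ^ (k mod 2)"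
    and R: "norm (\<rho> n) \<le> 5 * s ^ (2 * n)"
    and z: "\<bar>z\<bar> \<le> C * s ^ 4"
  shows "norm (F_term w \<rho> z m n p) \<le>
     5 * (fact (m + n) / (fact (n - p) * fact p * fact m)) * C ^ (m + p) * s ^ (3 * m + n + 4 * p + (m + n) mod 2)"
proof -
  define D :: real where "D = fact (n - p) * fact p * fact m"
  define k where "k = m + n"
  define E where "E = 3 * m + n + 4 * p + (m + n) mod 2"
  have Dpos: "D > 0" unfolding D_def by simp
  have eq: "norm (F_term w \<rho> z m n p) = norm (w k) * norm (\<rho> n) * \<bar>z\<bar> ^ (m + p) / D"
    unfolding F_term_def D_def k_def by (simp add: norm_mult norm_divide norm_power)
  have wk: "norm (w k) \<le> fact k * s ^ (k mod 2) / s ^ k"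
    using W[of k] s by (simp add: field_simps)
  have zz: "\<bar>z\<bar> ^ (m + p) \<le> (C * s ^ 4) ^ (m + p)" using z by (intro power_mono) auto
  have "norm (F_term w \<rho> z m n p) \<le> (fact k * s ^ (k mod 2) / s ^ k) * (5 * s ^ (2 * n)) * (C * s ^ 4) ^ (m + p) / D"
    unfolding eq using Dpos wk R zz s
    by (intro divide_right_mono mult_mono) auto
  also have "(C * s ^ 4) ^ (m + p) = C ^ (m + p) * s ^ (4 * (m + p))"
    by (metis power_mult power_mult_distrib)
  also have "(fact k * s ^ (k mod 2) / s ^ k) * (5 * s ^ (2 * n)) * (C ^ (m + p) * s ^ (4 * (m + p))) / D
      = 5 * (fact k / D) * C ^ (m + p) * ((s ^ (k mod 2) * s ^ (2 * n) * s ^ (4 * (m + p))) / s ^ k)"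
    by (simp add: field_simps)
  also have "s ^ (k mod 2) * s ^ (2 * n) * s ^ (4 * (m + p)) = s ^ E * s ^ k"
    unfolding E_def k_def power_add[symmetric] by (rule arg_cong[where f="\<lambda>e. s ^ e"]) simp
  also have "5 * (fact k / D) * C ^ (m + p) * (s ^ E * s ^ k / s ^ k) = 5 * (fact k / D) * C ^ (m + p) * s ^ E"
    using s by simp
  finally show ?thesis unfolding D_def k_def E_def .
qed

definition exc :: "nat \<Rightarrow> nat \<Rightarrow> nat \<Rightarrow> bool" where
  "exc m n p \<longleftrightarrow> (m = 0 \<and> p = 0) \<or> (m = 1 \<and> n = 1 \<and> p = 0) \<or> (m = 2 \<and> n = 0 \<and> p = 0)
     \<or> (m = 0 \<and> n = 2 \<and> p = 1) \<or> (m = 1 \<and> n = 2 \<and> p = 0) \<or> (m = 1 \<and> n = 3 \<and> p = 0)"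

lemma exp_check:
  assumes "m \<le> 2" "n \<le> 3" "p \<le> n" "\<not> exc m n p" "m + n \<noteq> 1"
  shows "8 \<le> 3 * m + n + 4 * p + (m + n) mod 2"
proof -
  have all: "\<forall>m\<in>{0,1,2::nat}. \<forall>n\<in>{0,1,2,3::nat}. \<forall>p\<in>{0,1,2,3::nat}. p \<le> n \<longrightarrow> \<not> exc m n p
     \<longrightarrow> m + n \<noteq> 1 \<longrightarrow> 8 \<le> 3 * m + n + 4 * p + (m + n) mod 2"
    by (simp add: exc_def)
  have "m \<in> {0,1,2}" "n \<in> {0,1,2,3}" "p \<in> {0,1,2,3}" using assms by auto
  then show ?thesis using assms all by blast
qed

lemma term_rem:
  fixes s C z :: real and w \<rho> :: "nat \<Rightarrow> complex"
  assumes s: "0 < s" "s \<le> 1" and C: "C > 0"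
    and W: "\<And>k. norm (w k) * s ^ k \<le> fact k * s ^ (k mod 2)" and W1: "w 1 = 0"
    and R: "\<forall>n\<le>3. norm (\<rho> n) \<le> 5 * s ^ (2 * n)"
    and z: "\<bar>z\<bar> \<le> C * s ^ 4" and q: "C * s ^ 3 \<le> 1/2"
    and np: "n \<le> 3" "p \<le> n" and ne: "\<not> exc m n p"
  shows "norm (F_term w \<rho> z m n p) \<le>
     5 * (4 * max 1 C ^ 5 + 8 * C ^ 3 * max 1 C ^ 3) * s ^ 8 * ((real m + 3) ^ 3 * (1/2) ^ m)"
proof (cases "m + n = 1")
  case True
  then have "F_term w \<rho> z m n p = 0" using W1 unfolding F_term_def by simp
  then show ?thesis using C s by simp
next
  case False
  define M where "M = max 1 C"
  define E where "E = 3 * m + n + 4 * p + (m + n) mod 2"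
  define Y where "Y = C ^ (m + p) * s ^ E"
  have M1: "1 \<le> M" "C \<le> M" unfolding M_def by auto
  have Y0: "0 \<le> Y" unfolding Y_def using C s by simp
  have Yb: "Y \<le> (4 * M ^ 5 + 8 * C ^ 3 * M ^ 3) * s ^ 8 * (1/2) ^ m"
  proof (cases "m \<le> 2")
    case True
    have E8: "8 \<le> E" unfolding E_def using exp_check[OF True np ne False] .
    have "s ^ E \<le> s ^ 8" using s E8 by (intro power_decreasing) auto
    moreover have "C ^ (m + p) \<le> M ^ 5"
    proof -
      have "C ^ (m + p) \<le> M ^ (m + p)" using C M1 by (intro power_mono) auto
      also have "\<dots> \<le> M ^ 5" using M1 True np by (intro power_increasing) auto
      finally show ?thesis .
    qed
    ultimately have "Y \<le> M ^ 5 * s ^ 8" unfolding Y_def using C s M1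
      by (intro mult_mono) auto
    also have "\<dots> \<le> 4 * M ^ 5 * s ^ 8 * (1/2) ^ m"
    proof -
      have "(1/4::real) \<le> (1/2) ^ m"
      proof -
        have "(1/2::real) ^ 2 \<le> (1/2) ^ m" using True by (intro power_decreasing) auto
        then show ?thesis by (simp add: power2_eq_square)
      qed
      then have "1 \<le> 4 * (1/2::real) ^ m" by simp
      moreover have "0 \<le> M ^ 5 * s ^ 8" using M1 s by simp
      ultimately have "M ^ 5 * s ^ 8 * 1 \<le> M ^ 5 * s ^ 8 * (4 * (1/2) ^ m)"
        by (rule mult_left_mono)
      then show ?thesis by (simp add: algebra_simps)
    qed
    also have "\<dots> \<le> (4 * M ^ 5 + 8 * C ^ 3 * M ^ 3) * s ^ 8 * (1/2) ^ m"
      using C M1 s by (intro mult_right_mono) auto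
    finally show ?thesis .
  next
    case False
    then have m3: "m \<ge> 3" by simp
    have "s ^ E \<le> s ^ (3 * m)" using s unfolding E_def by (intro power_decreasing) auto
    have Cp: "C ^ p \<le> M ^ 3"
    proof -
      have "C ^ p \<le> M ^ p" using C M1 by (intro power_mono) auto
      also have "\<dots> \<le> M ^ 3" using M1 np by (intro power_increasing) auto
      finally show ?thesis .
    qed
    have "Y \<le> C ^ m * C ^ p * s ^ (3 * m)" unfolding Y_def power_add
      using \<open>s ^ E \<le> s ^ (3 * m)\<close> C by (intro mult_left_mono) auto
    also have "\<dots> = (C * s ^ 3) ^ m * C ^ p" by (simp add: power_mult power_mult_distrib)
    also have "(C * s ^ 3) ^ m = (C * s ^ 3) ^ 3 * (C * s ^ 3) ^ (m - 3)"
      using m3 by (simp add: power_add[symmetric])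
    also have "(C * s ^ 3) ^ (m - 3) \<le> (1/2) ^ (m - 3)" using q C s by (intro power_mono) auto
    hence "(C * s ^ 3) ^ 3 * (C * s ^ 3) ^ (m - 3) * C ^ p \<le> (C * s ^ 3) ^ 3 * (1/2) ^ (m - 3) * M ^ 3"
      using Cp C s by (intro mult_mono) auto
    also have "(1/2::real) ^ (m - 3) = 8 * (1/2) ^ m"
    proof -
      have "(1/2::real) ^ m = (1/2) ^ 3 * (1/2) ^ (m - 3)" using m3 by (simp add: power_add[symmetric])
      then show ?thesis by (simp add: power3_eq_cube)
    qed
    also have "(C * s ^ 3) ^ 3 = C ^ 3 * s ^ 9" by (simp add: power_mult_distrib power_mult[symmetric])
    also have "C ^ 3 * s ^ 9 * (8 * (1 / 2) ^ m) * M ^ 3 \<le> 8 * C ^ 3 * M ^ 3 * s ^ 8 * (1/2) ^ m"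
    proof -
      have "s ^ 9 \<le> s ^ 8" using s by (intro power_decreasing) auto
      moreover have "0 \<le> C ^ 3 * (8 * (1 / 2) ^ m) * M ^ 3" using C M1 by simp
      ultimately have "C ^ 3 * (8 * (1 / 2) ^ m) * M ^ 3 * s ^ 9 \<le> C ^ 3 * (8 * (1 / 2) ^ m) * M ^ 3 * s ^ 8"
        by (rule mult_left_mono)
      then show ?thesis by (simp add: algebra_simps)
    qed
    also have "\<dots> \<le> (4 * M ^ 5 + 8 * C ^ 3 * M ^ 3) * s ^ 8 * (1/2) ^ m"
      using C M1 s by (intro mult_right_mono) auto
    finally show ?thesis by simp
  qed
  have "norm (F_term w \<rho> z m n p) \<le>
     5 * (fact (m + n) / (fact (n - p) * fact p * fact m)) * Y"
    unfolding Y_def E_def mult.assoc[symmetric] using np R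
    by (intro term_general[OF s(1) W _ z]) auto
  also have "\<dots> \<le> 5 * (real m + 3) ^ 3 * ((4 * M ^ 5 + 8 * C ^ 3 * M ^ 3) * s ^ 8 * (1/2) ^ m)"
    using coeff_le[OF np(1), of m p] Y0 Yb by (intro mult_mono mult_left_mono) auto
  finally show ?thesis unfolding M_def by (simp add: algebra_simps)
qed




lemma Ex_expand:
  "(\<Sum>m<3. \<Sum>n\<le>3. \<Sum>p\<le>n. (if exc m n p then F_term w \<rho> z m n p else 0))
   = (\<Sum>n\<le>3. F_term w \<rho> z 0 n 0) + (F_term w \<rho> z 0 2 1 + F_term w \<rho> z 1 1 0 + F_term w \<rho> z 2 0 0
      + F_term w \<rho> z 1 2 0 + F_term w \<rho> z 1 3 0)"
  by (simp add: lessThan_nat_numeral atMost_nat_numeral exc_def)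

lemma F0_expand:
  "(\<Sum>n\<le>3. \<Sum>p\<le>n. F_term w \<rho> 0 0 n p) = (\<Sum>n\<le>3. F_term w \<rho> z 0 n 0)"
  by (simp add: atMost_nat_numeral F_term_def)

lemma listed_expand:
  assumes "\<rho> 0 = 1"
  shows "F_term w \<rho> z 0 2 1 + F_term w \<rho> z 1 1 0 + F_term w \<rho> z 2 0 0
      + F_term w \<rho> z 1 2 0 + F_term w \<rho> z 1 3 0
    = - \<i> * complex_of_real z * \<rho> 1 * cnj (w 2)
                  - complex_of_real z * (\<rho> 2 * (cnj (w 2) + cnj (w 3) / 2) - \<i> / 6 * \<rho> 3 * cnj (w 4))
                  + (complex_of_real z)\<^sup>2 * cnj (w 2) / 2"
  using assms
  apply (simp add: F_term_def fact_numeral power2_eq_square power3_eq_cube)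
  apply (simp add: field_simps eval_nat_numeral)
  done

lemma f_summable: "summable (\<lambda>m. (real m + 3) ^ 3 * (1/2::real) ^ m)"
proof (rule summable_ratio_test[where c = "3/4" and N = 4])
  fix n :: nat assume n: "n \<ge> 4"
  define k where "k = real n - 4"
  have k: "real n = k + 4" "k \<ge> 0" using n unfolding k_def by auto
  have "2 * (k + 8) ^ 3 \<le> 3 * (k + 7) ^ 3"
  proof -
    have a: "0 \<le> k * (k * k)" "0 \<le> k * (k * 15)" "0 \<le> k * 57" using k by auto
    show ?thesis using a by (simp add: power3_eq_cube power2_eq_square algebra_simps)
  qed
  then have "2 * (real n + 4) ^ 3 \<le> 3 * (real n + 3) ^ 3" using k by (simp add: add.assoc)
  then show "norm ((real (Suc n) + 3) ^ 3 * (1/2::real) ^ Suc n) \<le> 3/4 * norm ((real n + 3) ^ 3 * (1/2::real) ^ n)"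
    by (simp add: add.commute add.left_commute)
qed simp

lemma count10: "(\<Sum>n\<le>(3::nat). \<Sum>p\<le>n. (B::real)) = 10 * B"
  by (simp add: atMost_nat_numeral)




lemma series_main:
  fixes s C z :: real and w \<rho> :: "nat \<Rightarrow> complex"
  assumes s: "0 < s" "s \<le> 1" and C: "C > 0"
    and W: "\<And>k. norm (w k) * s ^ k \<le> fact k * s ^ (k mod 2)" and W1: "w 1 = 0"
    and \<rho>0: "\<rho> 0 = 1"
    and R: "\<forall>n\<le>3. norm (\<rho> n) \<le> 5 * s ^ (2 * n)"
    and z: "\<bar>z\<bar> \<le> C * s ^ 4" and q: "C * s ^ 3 \<le> 1/2"
  shows "summable (\<lambda>m. \<Sum>n\<le>3. \<Sum>p\<le>n. norm (F_term w \<rho> z m n p))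
    \<and> norm (F_ser w \<rho> z - F_ser w \<rho> 0
               - (- \<i> * complex_of_real z * \<rho> 1 * cnj (w 2)
                  - complex_of_real z * (\<rho> 2 * (cnj (w 2) + cnj (w 3) / 2) - \<i> / 6 * \<rho> 3 * cnj (w 4))
                  + (complex_of_real z)\<^sup>2 * cnj (w 2) / 2))
      \<le> 10 * (5 * (4 * max 1 C ^ 5 + 8 * C ^ 3 * max 1 C ^ 3))
           * (\<Sum>m. (real m + 3) ^ 3 * (1/2::real) ^ m) * s ^ 8"
proof -
  define Kc where "Kc = 5 * (4 * max 1 C ^ 5 + 8 * C ^ 3 * max 1 C ^ 3)"
  define f where "f = (\<lambda>m. (real m + 3) ^ 3 * (1/2::real) ^ m)"
  define B where "B = (\<lambda>m. Kc * s ^ 8 * f m)"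
  have Kc0: "0 \<le> Kc" unfolding Kc_def using C by simp
  have f0: "0 \<le> f m" for m unfolding f_def by simp
  have B0: "0 \<le> B m" for m unfolding B_def using Kc0 f0 s by simp
  have TB: "norm (F_term w \<rho> z m n p) \<le> B m" if "n \<le> 3" "p \<le> n" "\<not> exc m n p" for m n p
    unfolding B_def Kc_def f_def using term_rem[OF s C W W1 R z q that] by simp
  define Ex where "Ex = (\<lambda>m. \<Sum>n\<le>3. \<Sum>p\<le>n. (if exc m n p then F_term w \<rho> z m n p else 0))"
  define Rm where "Rm = (\<lambda>m. \<Sum>n\<le>3. \<Sum>p\<le>n. (if exc m n p then 0 else F_term w \<rho> z m n p))"
  have RB: "norm (Rm m) \<le> 10 * B m" for m
  proof -
    have "norm (Rm m) \<le> (\<Sum>n\<le>3. norm (\<Sum>p\<le>n. (if exc m n p then 0 else F_term w \<rho> z m n p)))"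
      unfolding Rm_def by (rule norm_sum)
    also have "\<dots> \<le> (\<Sum>n\<le>(3::nat). \<Sum>p\<le>n. B m)"
    proof (rule sum_mono)
      fix n :: nat assume n: "n \<in> {..3}"
      have "norm (\<Sum>p\<le>n. (if exc m n p then 0 else F_term w \<rho> z m n p))
          \<le> (\<Sum>p\<le>n. norm (if exc m n p then 0 else F_term w \<rho> z m n p))" by (rule norm_sum)
      also have "\<dots> \<le> (\<Sum>p\<le>n. B m)"
      proof (rule sum_mono)
        fix p assume p: "p \<in> {..n}"
        show "norm (if exc m n p then 0 else F_term w \<rho> z m n p) \<le> B m"
          using TB[of n p m] n p B0[of m] by auto
      qed
      finally show "norm (\<Sum>p\<le>n. (if exc m n p then 0 else F_term w \<rho> z m n p)) \<le> (\<Sum>p\<le>n. B m)" .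
    qed
    also have "\<dots> = 10 * B m" by (rule count10)
    finally show ?thesis .
  qed
  have sumB: "summable (\<lambda>m. 10 * B m)" unfolding B_def f_def
    by (intro summable_mult f_summable)
  have sumR: "summable Rm"
    by (rule summable_comparison_test'[OF sumB RB])
  have sumRn: "summable (\<lambda>m. norm (Rm m))"
    by (rule summable_comparison_test'[OF sumB]) (use RB in auto)
  have Ex0: "Ex m = 0" if "m \<notin> {..<3}" for m
    using that unfolding Ex_def exc_def by auto
  have sumEx: "summable Ex" by (rule summable_finite[of "{..<3}"]) (use Ex0 in auto)
  have sEx: "suminf Ex = (\<Sum>m<3. Ex m)" by (rule suminf_finite[of "{..<3}"]) (use Ex0 in auto)
  have GE: "(\<Sum>n\<le>3. \<Sum>p\<le>n. F_term w \<rho> z m n p) = Ex m + Rm m" for m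
    unfolding Ex_def Rm_def sum.distrib[symmetric] by (intro sum.cong refl) auto
  have Fz: "F_ser w \<rho> z = suminf Ex + suminf Rm"
    unfolding F_ser_def GE using suminf_add[OF sumEx sumR] by simp
  have F0: "F_ser w \<rho> 0 = (\<Sum>n\<le>3. \<Sum>p\<le>n. F_term w \<rho> 0 0 n p)"
  proof -
    have "F_ser w \<rho> 0 = (\<Sum>m\<in>{0}. \<Sum>n\<le>3. \<Sum>p\<le>n. F_term w \<rho> 0 m n p)"
      unfolding F_ser_def by (rule suminf_finite) (auto simp: F_term_def power_0_left)
    then show ?thesis by simp
  qed
  have diff: "F_ser w \<rho> z - F_ser w \<rho> 0
               - (- \<i> * complex_of_real z * \<rho> 1 * cnj (w 2)
                  - complex_of_real z * (\<rho> 2 * (cnj (w 2) + cnj (w 3) / 2) - \<i> / 6 * \<rho> 3 * cnj (w 4))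
                  + (complex_of_real z)\<^sup>2 * cnj (w 2) / 2) = suminf Rm"
    unfolding Fz F0 sEx unfolding Ex_def Ex_expand F0_expand[where z = z] listed_expand[of \<rho> w z, OF \<rho>0, symmetric]
    by simp
  have "norm (suminf Rm) \<le> (\<Sum>m. norm (Rm m))" by (rule summable_norm[OF sumRn])
  also have "\<dots> \<le> (\<Sum>m. 10 * B m)" by (rule suminf_le[OF RB sumRn sumB])
  also have "\<dots> = 10 * Kc * (\<Sum>m. f m) * s ^ 8"
    unfolding B_def using suminf_mult[OF f_summable[folded f_def], of "10 * Kc * s ^ 8"]
    by (simp add: algebra_simps)
  finally have bound: "norm (suminf Rm) \<le> 10 * Kc * (\<Sum>m. f m) * s ^ 8" .
  have summ: "summable (\<lambda>m. \<Sum>n\<le>3. \<Sum>p\<le>n. norm (F_term w \<rho> z m n p))"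
  proof (rule summable_comparison_test'[OF sumB, where N = 3])
    fix m :: nat assume m: "m \<ge> 3"
    have "(\<Sum>n\<le>(3::nat). \<Sum>p\<le>n. norm (F_term w \<rho> z m n p)) \<le> (\<Sum>n\<le>(3::nat). \<Sum>p\<le>n. B m)"
      using m by (intro sum_mono TB) (auto simp: exc_def)
    then show "norm (\<Sum>n\<le>3. \<Sum>p\<le>n. norm (F_term w \<rho> z m n p)) \<le> 10 * B m"
      unfolding count10 by (simp add: sum_nonneg del: sum_constant)
  qed
  show ?thesis using summ diff bound unfolding Kc_def f_def by simp
qed




theorem theorem4:
  shows "\<forall>C::real. C > 0 \<longrightarrow> (\<exists>K::real. \<forall>(\<delta>::real) (x::real \<Rightarrow> complex) (t::real) (w::nat \<Rightarrow> complex) (z::real).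
     (0 < \<delta> \<and> \<delta> \<le> 1
      \<and> (\<exists>e>0. (\<forall>s\<in>ball t e. x s \<noteq> 0
                   \<and> (\<forall>k<3. (nderiv k x has_vector_derivative nderiv (Suc k) x s) (at s)))
               \<and> continuous_on (ball t e) (nderiv 3 x))
      \<and> inst_freq x t > 0
      \<and> \<bar>inst_bw x t / inst_freq x t\<bar> \<le> \<delta>
      \<and> (\<forall>n\<in>{2,3}. norm (nderiv (n - 1) (inst_eta x) t / complex_of_real (inst_freq x t ^ n)) \<le> \<delta> ^ n)
      \<and> w 0 = 1 \<and> w 1 = 0
      \<and> (\<forall>k. even k \<and> k \<ge> 2 \<longrightarrow> norm (w k) \<le> fact k * \<delta> powr (- real k / 2))
      \<and> (\<forall>k. odd k \<and> k \<ge> 3 \<longrightarrow> norm (w k) \<le> fact k * \<delta> powr (- (real k - 1) / 2))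
      \<and> C * \<delta> powr (3/2) \<le> 1/2
      \<and> \<bar>z\<bar> \<le> C * \<delta>\<^sup>2)
     \<longrightarrow>
     (let \<rho> = rho_tilde x t; Z = complex_of_real z in
       summable (\<lambda>m. \<Sum>n\<le>3. \<Sum>p\<le>n. norm (F_term w \<rho> z m n p))
       \<and> norm (F_ser w \<rho> z - F_ser w \<rho> 0
               - (- \<i> * Z * \<rho> 1 * cnj (w 2)
                  - Z * (\<rho> 2 * (cnj (w 2) + cnj (w 3) / 2) - \<i> / 6 * \<rho> 3 * cnj (w 4))
                  + Z\<^sup>2 * cnj (w 2) / 2))
             \<le> K * \<delta> ^ 4))"

proof (intro allI impI)
  fix C :: real assume C: "C > 0"
  define K where "K = 10 * (5 * (4 * max 1 C ^ 5 + 8 * C ^ 3 * max 1 C ^ 3))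
           * (\<Sum>m. (real m + 3) ^ 3 * (1/2::real) ^ m)"
  show "\<exists>K::real. \<forall>(\<delta>::real) (x::real \<Rightarrow> complex) (t::real) (w::nat \<Rightarrow> complex) (z::real).
     (0 < \<delta> \<and> \<delta> \<le> 1
      \<and> (\<exists>e>0. (\<forall>s\<in>ball t e. x s \<noteq> 0
                   \<and> (\<forall>k<3. (nderiv k x has_vector_derivative nderiv (Suc k) x s) (at s)))
               \<and> continuous_on (ball t e) (nderiv 3 x))
      \<and> inst_freq x t > 0
      \<and> \<bar>inst_bw x t / inst_freq x t\<bar> \<le> \<delta>
      \<and> (\<forall>n\<in>{2,3}. norm (nderiv (n - 1) (inst_eta x) t / complex_of_real (inst_freq x t ^ n)) \<le> \<delta> ^ n)
      \<and> w 0 = 1 \<and> w 1 = 0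
      \<and> (\<forall>k. even k \<and> k \<ge> 2 \<longrightarrow> norm (w k) \<le> fact k * \<delta> powr (- real k / 2))
      \<and> (\<forall>k. odd k \<and> k \<ge> 3 \<longrightarrow> norm (w k) \<le> fact k * \<delta> powr (- (real k - 1) / 2))
      \<and> C * \<delta> powr (3/2) \<le> 1/2
      \<and> \<bar>z\<bar> \<le> C * \<delta>\<^sup>2)
     \<longrightarrow>
     (let \<rho> = rho_tilde x t; Z = complex_of_real z in
       summable (\<lambda>m. \<Sum>n\<le>3. \<Sum>p\<le>n. norm (F_term w \<rho> z m n p))
       \<and> norm (F_ser w \<rho> z - F_ser w \<rho> 0
               - (- \<i> * Z * \<rho> 1 * cnj (w 2)
                  - Z * (\<rho> 2 * (cnj (w 2) + cnj (w 3) / 2) - \<i> / 6 * \<rho> 3 * cnj (w 4))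
                  + Z\<^sup>2 * cnj (w 2) / 2))
             \<le> K * \<delta> ^ 4)"
  proof (rule exI[of _ K], intro allI impI)
    fix \<delta> :: real and x :: "real \<Rightarrow> complex" and t :: real and w :: "nat \<Rightarrow> complex" and z :: real
    assume A: "0 < \<delta> \<and> \<delta> \<le> 1
      \<and> (\<exists>e>0. (\<forall>s\<in>ball t e. x s \<noteq> 0
                   \<and> (\<forall>k<3. (nderiv k x has_vector_derivative nderiv (Suc k) x s) (at s)))
               \<and> continuous_on (ball t e) (nderiv 3 x))
      \<and> inst_freq x t > 0
      \<and> \<bar>inst_bw x t / inst_freq x t\<bar> \<le> \<delta>
      \<and> (\<forall>n\<in>{2,3}. norm (nderiv (n - 1) (inst_eta x) t / complex_of_real (inst_freq x t ^ n)) \<le> \<delta> ^ n)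
      \<and> w 0 = 1 \<and> w 1 = 0
      \<and> (\<forall>k. even k \<and> k \<ge> 2 \<longrightarrow> norm (w k) \<le> fact k * \<delta> powr (- real k / 2))
      \<and> (\<forall>k. odd k \<and> k \<ge> 3 \<longrightarrow> norm (w k) \<le> fact k * \<delta> powr (- (real k - 1) / 2))
      \<and> C * \<delta> powr (3/2) \<le> 1/2
      \<and> \<bar>z\<bar> \<le> C * \<delta>\<^sup>2"
    from A obtain e where e: "e > 0" and H: "\<forall>s\<in>ball t e. x s \<noteq> 0
                   \<and> (\<forall>k<3. (nderiv k x has_vector_derivative nderiv (Suc k) x s) (at s))" by blast
    have d: "0 < \<delta>" "\<delta> \<le> 1" using A by auto
    define s where "s = sqrt \<delta>"
    have s: "0 < s" "s \<le> 1" using d unfolding s_def by auto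
    have ds: "\<delta> = s ^ 2" using d unfolding s_def by simp
    have s2: "s ^ 2 = s powr 2" using powr_realpow[of s 2] s by simp
    have pw: "\<delta> powr r = s powr (2 * r)" for r
      unfolding ds s2 by (rule powr_powr)
    note RB = rho_bounds[OF e H, of \<delta>]
    have RBs: "rho_tilde x t 0 = 1" "norm (rho_tilde x t 1) \<le> \<delta>"
      "norm (rho_tilde x t 2) \<le> 2 * \<delta>^2" "norm (rho_tilde x t 3) \<le> 5 * \<delta>^3"
      using RB A by auto
    have R: "\<forall>n\<le>3. norm (rho_tilde x t n) \<le> 5 * s ^ (2 * n)"
    proof (intro allI impI)
      fix n :: nat assume n: "n \<le> 3"
      have "n \<in> {0,1,2,3}" using n by auto
      moreover have "0 \<le> s ^ 2" "0 \<le> s ^ 4" "0 \<le> s ^ 6" using s by auto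
      ultimately show "norm (rho_tilde x t n) \<le> 5 * s ^ (2 * n)"
        using RBs unfolding ds apply (auto simp: power_mult[symmetric])
        using zero_less_power[OF s(1), of 2] zero_less_power[OF s(1), of 4] by linarith+
    qed
    have W: "norm (w k) * s ^ k \<le> fact k * s ^ (k mod 2)" for k
    proof (cases "k \<le> 1")
      case True
      then have "k = 0 \<or> k = 1" by auto
      then show ?thesis using A s by auto
    next
      case False
      show ?thesis
      proof (cases "even k")
        case True
        have "norm (w k) \<le> fact k * \<delta> powr (- real k / 2)" using A True False by auto
        also have "\<delta> powr (- real k / 2) = inverse (s ^ k)"
          unfolding pw using s by (simp add: powr_minus powr_realpow)
        finally have h: "norm (w k) \<le> fact k * inverse (s ^ k)" .
        have "norm (w k) * s ^ k \<le> fact k * inverse (s ^ k) * s ^ k"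
          by (rule mult_right_mono[OF h]) (use s in simp)
        also have "\<dots> = fact k" using s by simp
        finally show ?thesis using True by simp
      next
        case odd: False
        have k3: "k \<ge> 3" using odd False by (cases "k = 2") auto
        have Aodd: "\<forall>k. odd k \<and> k \<ge> 3 \<longrightarrow> norm (w k) \<le> fact k * \<delta> powr (- (real k - 1) / 2)"
          using A by blast
        have "norm (w k) \<le> fact k * \<delta> powr (- (real k - 1) / 2)" using Aodd odd k3 by blast
        also have "\<delta> powr (- (real k - 1) / 2) = inverse (s ^ (k - 1))"
        proof -
          have ex: "2 * (- (real k - 1) / 2) = - real (k - 1)" using False by (simp add: of_nat_diff)
          show ?thesis unfolding pw ex using s by (simp add: powr_minus powr_realpow)
        qed
        finally have h: "norm (w k) \<le> fact k * inverse (s ^ (k - 1))" .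
        have "norm (w k) * s ^ k \<le> fact k * inverse (s ^ (k - 1)) * s ^ k"
          by (rule mult_right_mono[OF h]) (use s in simp)
        also have "fact k * inverse (s ^ (k - 1)) * s ^ k = fact k * s"
        proof -
          have "s ^ k = s ^ (k - 1) * s" using False by (simp add: power_Suc2[symmetric])
          then show ?thesis using s by simp
        qed
        also have "\<dots> = fact k * s ^ (k mod 2)" using odd by (simp add: odd_iff_mod_2_eq_one)
        finally show ?thesis .
      qed
    qed
    have W1: "w 1 = 0" using A by auto
    have z: "\<bar>z\<bar> \<le> C * s ^ 4" using A unfolding ds by (simp add: power_mult[symmetric])
    have q: "C * s ^ 3 \<le> 1/2"
    proof -
      have "\<delta> powr (3/2) = s ^ 3" unfolding pw using s by (simp add: powr_realpow)
      then show ?thesis using A by simp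
    qed
    note main = series_main[OF s C W W1 RBs(1) R z q]
    show "let \<rho> = rho_tilde x t; Z = complex_of_real z in
       summable (\<lambda>m. \<Sum>n\<le>3. \<Sum>p\<le>n. norm (F_term w \<rho> z m n p))
       \<and> norm (F_ser w \<rho> z - F_ser w \<rho> 0
               - (- \<i> * Z * \<rho> 1 * cnj (w 2)
                  - Z * (\<rho> 2 * (cnj (w 2) + cnj (w 3) / 2) - \<i> / 6 * \<rho> 3 * cnj (w 4))
                  + Z\<^sup>2 * cnj (w 2) / 2))
             \<le> K * \<delta> ^ 4"
      using main unfolding Let_def K_def ds by (simp add: power_mult[symmetric])
  qed
qed


end
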